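(* Let $p$ be a prime and $\alpha\geqslant 2$ an integer. For $\beta\in\mathbb{N}$, $l,n\in\mathbb{N}$ and $r\in\mathbb{Z}$ put $$T_{l,\beta}^{(p)}(n,r)=\frac{l!\,p^l}{\lfloor n/p^{\beta-1}\rfloor!}\sum_{k\equiv r\ (\mathrm{mod}\ p^{\beta})}\binom nk(-1)^k\binom{(k-r)/p^{\beta}}l.$$ Then for all $l,n\in\mathbb{N}$ and $r\in\mathbb{Z}$, $$T_{l,\alpha+1}^{(p)}(n,r)\equiv(-1)^{\{r\}_p}\binom{\{n\}_p}{\{r\}_p}T_{l,\alpha}^{(p)}\Big(\Big\lfloor\frac np\Big\rfloor,\Big\lfloor\frac rp\Big\rfloor\Big)\pmod p.$$
   Context: The sum runs over all integers $k\equiv r\pmod{p^\beta}$, with $\binom nk=0$ unless $0\le k\le n$; $\binom xl=x(x-1)\cdots(x-l+1)/l!$ for any $x$. For an integer $a$ and positive integer $m$, $\{a\}_m$ is the least nonnegative residue of $a$ modulo $m$. For rationals (or elements of $\mathbb{Q}_p$) $u,v$, $u\equiv v\pmod{p^a}$ means $\operatorname{ord}_p(u-v)\ge a$. *)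

theory Defs
  imports "HOL-Computational_Algebra.Computational_Algebra"
begin

text \<open>Congruence of rationals modulo p^a: ord_p(u - v) \<ge> a, i.e. u - v = x/y with
  y not divisible by p and p^a dividing x.\<close>
definition qcong :: "rat \<Rightarrow> rat \<Rightarrow> nat \<Rightarrow> nat \<Rightarrow> bool" where
  "qcong u v p a \<longleftrightarrow>
     (\<exists>x y :: int. y \<noteq> 0 \<and> \<not> int p dvd y \<and> int p ^ a dvd x \<and> u - v = of_int x / of_int y)"

text \<open>T_{l,beta}^{(p)}(n,r). The sum over all integers k \<equiv> r (mod p^beta) reduces to
  0 \<le> k \<le> n since binom n k = 0 otherwise; (k - r)/p^beta is then an integer.\<close>
definition T :: "nat \<Rightarrow> nat \<Rightarrow> nat \<Rightarrow> nat \<Rightarrow> int \<Rightarrow> rat" where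
  "T p l \<beta> n r =
     (of_nat (fact l) * of_nat p ^ l / of_nat (fact (n div p ^ (\<beta> - 1)))) *
     (\<Sum>k \<in> {k. k \<le> n \<and> int k mod int p ^ \<beta> = r mod int p ^ \<beta>}.
        of_nat (n choose k) * (-1) ^ k * ((of_int ((int k - r) div int p ^ \<beta>) :: rat) gchoose l))"

end

theory Submission
  imports Defs
begin

definition act :: "int poly \<Rightarrow> (int \<Rightarrow> int) \<Rightarrow> int \<Rightarrow> int" where
  "act P f x = (\<Sum>i\<le>degree P. coeff P i * f (x + int i))"

lemma act_eq: "degree P \<le> N \<Longrightarrow> act P f x = (\<Sum>i\<le>N. coeff P i * f (x + int i))"
  unfolding act_def
  by (rule sum.mono_neutral_left) (auto simp: coeff_eq_0)

lemma act_add: "act (P + Q) f x = act P f x + act Q f x"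
proof -
  let ?N = "max (degree P) (degree Q)"
  have "degree (P + Q) \<le> ?N" by (rule degree_add_le_max)
  then show ?thesis
    by (simp add: act_eq[of _ ?N] sum.distrib algebra_simps)
qed

lemma act_smult: "act (smult a P) f x = a * act P f x"
proof -
  have "degree (smult a P) \<le> degree P" by simp
  then show ?thesis by (simp add: act_eq[of _ "degree P"] act_def sum_distrib_left algebra_simps)
qed

lemma act_0[simp]: "act 0 f x = 0" by (simp add: act_def)

lemma act_pCons0: "act (pCons 0 P) f x = act P f (x + 1)"
proof -
  have "degree (pCons 0 P) \<le> Suc (degree P)" by simp
  then have "act (pCons 0 P) f x = (\<Sum>i\<le>Suc (degree P). coeff (pCons 0 P) i * f (x + int i))"
    by (rule act_eq)
  also have "\<dots> = (\<Sum>i\<le>degree P. coeff P i * f (x + 1 + int i))"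
    by (subst sum.atMost_Suc_shift) (simp add: algebra_simps)
  finally show ?thesis by (simp add: act_def)
qed

lemma act_const: "act [:a:] f x = a * f x"
  by (simp add: act_def)

lemma act_pCons: "act (pCons a P) f x = a * f x + act P f (x + 1)"
proof -
  have "pCons a P = [:a:] + pCons 0 P" by simp
  then show ?thesis by (simp only: act_add act_pCons0 act_const)
qed

lemma act_fun_add: "act P (\<lambda>y. f y + g y) x = act P f x + act P g x"
  by (simp add: act_def sum.distrib algebra_simps)

lemma act_fun_smult: "act P (\<lambda>y. c * f y) x = c * act P f x"
  by (simp add: act_def sum_distrib_left algebra_simps)

lemma act_mult: "act (P * Q) f x = act P (act Q f) x"
proof (induction P arbitrary: x)
  case 0
  then show ?case by (simp add: act_def)
next
  case (pCons a P)
  have "pCons a P * Q = smult a Q + pCons 0 (P * Q)" by simp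
  then have "act (pCons a P * Q) f x = a * act Q f x + act (P * Q) f (x + 1)"
    by (simp only: act_add act_smult act_pCons0)
  also have "\<dots> = act (pCons a P) (act Q f) x"
    using pCons.IH by (simp add: act_pCons)
  finally show ?case .
qed

lemma act_1[simp]: "act 1 f x = f x" by (simp add: act_def)

lemma act_sum: "act (\<Sum>i\<in>S. P i) f x = (\<Sum>i\<in>S. act (P i) f x)"
  by (induction S rule: infinite_finite_induct) (auto simp: act_add)

lemma act_monom: "act (monom a k) f x = a * f (x + int k)"
proof -
  have "degree (monom a k) \<le> k" by (simp add: degree_monom_le)
  then have "act (monom a k) f x = (\<Sum>i\<le>k. coeff (monom a k) i * f (x + int i))"
    by (rule act_eq)
  also have "\<dots> = (\<Sum>i\<le>k. (if i = k then a * f (x + int k) else 0))"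
    by (intro sum.cong refl) (auto simp: coeff_monom)
  finally show ?thesis by simp
qed

lemma act_shift: "act P f (x + y) = act P (\<lambda>z. f (z + y)) x"
  by (simp add: act_def algebra_simps)

lemma act_dvd:
  assumes "\<And>i. c dvd coeff P i" "\<And>y. d dvd f y"
  shows "c * d dvd act P f x"
  unfolding act_def by (rule dvd_sum) (use assms in \<open>auto intro: mult_dvd_mono\<close>)

lemma act_cong: "(\<And>y. f y = g y) \<Longrightarrow> act P f x = act P g x"
  by (simp add: act_def)

lemma act_one_minus_X_pow:
  "act ((1 - monom 1 q) ^ M) f x = (\<Sum>k\<le>M. int (M choose k) * (-1) ^ k * f (x + int (q * k)))"
proof -
  have "(1 - monom (1::int) q) ^ M = (monom (-1) q + 1) ^ M" by (simp add: minus_monom[symmetric])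
  also have "\<dots> = (\<Sum>k\<le>M. of_nat (M choose k) * monom (-1) q ^ k * 1 ^ (M - k))"
    by (rule binomial_ring)
  also have "\<dots> = (\<Sum>k\<le>M. monom (int (M choose k) * (-1) ^ k) (q * k))"
    by (intro sum.cong refl) (simp add: monom_power of_nat_poly smult_monom mult.commute)
  finally show ?thesis
    by (simp add: act_sum act_monom algebra_simps)
qed


locale pr =
  fixes p :: nat
  assumes pp: "prime p"
begin

definition vf :: "nat \<Rightarrow> nat" where "vf n = multiplicity p (fact n :: nat)"

lemma p_gt1: "p > 1" using pp prime_gt_1_nat by blast

lemma vf_0[simp]: "vf 0 = 0" by (simp add: vf_def)

lemma vf_Suc: "vf (Suc n) = vf n + multiplicity p (Suc n)"
proof -
  have "fact (Suc n) = (Suc n) * (fact n :: nat)" by simp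
  then have "multiplicity p (fact (Suc n) :: nat) = multiplicity p (Suc n) + multiplicity p (fact n :: nat)"
    by (simp only:) (rule prime_elem_multiplicity_mult_distrib, use pp in auto)
  then show ?thesis by (simp add: vf_def)
qed

lemma vf_rec: "vf n = n div p + vf (n div p)"
proof (induction n)
  case 0
  then show ?case by simp
next
  case (Suc n)
  show ?case
  proof (cases "p dvd Suc n")
    case True
    then obtain m where m: "Suc n = p * m" by blast
    with p_gt1 have m0: "m > 0" by (cases m) auto
    have d1: "Suc n div p = m" using m p_gt1 by simp
    have d2: "n div p = m - 1"
    proof -
      have "n = (p - 1) + p * (m - 1)" using m m0 p_gt1
        by (cases m) (auto simp: algebra_simps)
      then have "n div p = (p - 1 + p * (m - 1)) div p"
        by (rule arg_cong[where f="\<lambda>x. x div p"])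
      also have "\<dots> = (m - 1) + (p - 1) div p"
        by (rule div_mult_self2) (use p_gt1 in simp)
      finally show ?thesis using p_gt1 by simp
    qed
    have "multiplicity p (Suc n) = Suc (multiplicity p m)"
      using m m0 multiplicity_times_same[where p=p and x=m] p_gt1 by simp
    moreover have "vf m = vf (m - 1) + multiplicity p m"
      using vf_Suc[of "m - 1"] m0 by simp
    ultimately show ?thesis using Suc.IH vf_Suc[of n] d1 d2 m0 by simp
  next
    case False
    then have "multiplicity p (Suc n) = 0" by (rule not_dvd_imp_multiplicity_0)
    moreover have "Suc n div p = n div p"
      using False p_gt1 by (metis div_Suc dvd_eq_mod_eq_0 mod_Suc)
    ultimately show ?thesis using Suc.IH vf_Suc[of n] by simp
  qed
qed

lemma vf_fleck: "n \<ge> 1 \<Longrightarrow> vf n * (p - 1) \<le> n - 1"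
proof (induction n rule: less_induct)
  case (less n)
  show ?case
  proof (cases "n div p = 0")
    case True
    then show ?thesis using vf_rec[of n] by simp
  next
    case False
    then have "n div p \<ge> 1" by simp
    moreover have "n div p < n" using p_gt1 less.prems by simp
    ultimately have ih: "vf (n div p) * (p - 1) \<le> n div p - 1" using less.IH by blast
    have "vf n * (p - 1) = (n div p) * (p - 1) + vf (n div p) * (p - 1)"
      by (subst vf_rec) (simp add: algebra_simps)
    also have "\<dots> \<le> (n div p) * (p - 1) + (n div p - 1)" using ih by simp
    also have "\<dots> = p * (n div p) - 1" using False p_gt1
      by (cases p) (auto simp: algebra_simps)
    also have "\<dots> \<le> n - 1" using minus_mod_eq_mult_div[of n p] by simp
    finally show ?thesis .
  qed
qed

lemma vf_le: "j \<ge> 1 \<Longrightarrow> vf j \<le> j - 1"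
proof -
  assume "j \<ge> 1"
  then have "vf j * (p - 1) \<le> j - 1" by (rule vf_fleck)
  moreover have "vf j * 1 \<le> vf j * (p - 1)" using p_gt1 by (intro mult_le_mono2) simp
  ultimately show ?thesis by linarith
qed

lemma vf_mono: "a \<le> b \<Longrightarrow> vf a \<le> vf b"
  unfolding vf_def by (rule dvd_imp_multiplicity_le) (auto intro: fact_dvd)

lemma vf_diff: "a \<le> b \<Longrightarrow> vf a + vf (b div p ^ k) \<le> vf b + vf (a div p ^ k)"
proof (induction k arbitrary: a b)
  case 0
  then show ?case by simp
next
  case (Suc k)
  have "a div p \<le> b div p" using Suc.prems by (rule div_le_mono)
  then have ih: "vf (a div p) + vf ((b div p) div p ^ k) \<le> vf (b div p) + vf ((a div p) div p ^ k)"
    by (rule Suc.IH)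
  have e1: "(b div p) div p ^ k = b div p ^ Suc k" "(a div p) div p ^ k = a div p ^ Suc k"
    by (simp_all add: div_mult2_eq)
  show ?case using ih[unfolded e1] vf_rec[of a] vf_rec[of b] \<open>a div p \<le> b div p\<close> by linarith
qed

lemma vf_choose: "j \<le> M \<Longrightarrow> vf M = vf j + vf (M - j) + multiplicity p (M choose j)"
proof -
  assume j: "j \<le> M"
  have "fact M = (M choose j) * (fact j * fact (M - j) :: nat)"
    using binomial_fact_lemma[OF j] by (simp add: algebra_simps)
  moreover have "(M choose j) \<noteq> 0" using j by simp
  ultimately have "multiplicity p (fact M :: nat) = multiplicity p (M choose j) + (multiplicity p (fact j :: nat) + multiplicity p (fact (M - j) :: nat))"
    using pp by (simp add: prime_elem_multiplicity_mult_distrib)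
  then show ?thesis by (simp add: vf_def)
qed

lemma vf_key:
  assumes "1 \<le> j" "j \<le> M"
  shows "vf (M div p ^ k) + 1 \<le> vf ((M - j) div p ^ k) + multiplicity p (M choose j) + j"
proof -
  have "vf (M - j) + vf (M div p ^ k) \<le> vf M + vf ((M - j) div p ^ k)"
    by (rule vf_diff) simp
  moreover have "vf M = vf j + vf (M - j) + multiplicity p (M choose j)"
    using assms by (rule_tac vf_choose) simp
  moreover have "vf j \<le> j - 1" using assms by (rule_tac vf_le) simp
  ultimately show ?thesis using assms by linarith
qed


definition ind :: "int \<Rightarrow> int \<Rightarrow> int" where
  "ind t x = (if int p dvd (x - t) then 1 else 0)"

definition fl :: "nat \<Rightarrow> int \<Rightarrow> int" where
  "fl M t = (\<Sum>k\<le>M. int (M choose k) * (-1) ^ k * ind t (int k))"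

lemma fl_act: "act ((1 - monom 1 1) ^ M) (ind t) x = fl M (t - x)"
  unfolding act_one_minus_X_pow fl_def ind_def by (intro sum.cong refl) (simp add: algebra_simps)

lemma choose_pm1: "i \<le> p - 1 \<Longrightarrow> int p dvd int ((p - 1) choose i) * (-1) ^ i - 1"
proof (induction i)
  case 0
  then show ?case by simp
next
  case (Suc i)
  have pS: "p = Suc (p - 1)" using p_gt1 by simp
  have "p choose Suc i = ((p - 1) choose i) + ((p - 1) choose Suc i)"
    by (subst pS) (simp only: binomial_Suc_Suc)
  then have eq: "int ((p - 1) choose Suc i) * (-1) ^ Suc i - 1
     = - (int (p choose Suc i) * (-1) ^ i) + (int ((p - 1) choose i) * (-1) ^ i - 1)"
    by (simp add: algebra_simps)
  have "p dvd (p choose Suc i)"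
    using Suc.prems p_gt1 pp by (intro dvd_choose_prime) auto
  then have "int p dvd int (p choose Suc i)" by simp
  then have "int p dvd - (int (p choose Suc i) * (-1) ^ i)" by simp
  moreover have "int p dvd int ((p - 1) choose i) * (-1) ^ i - 1" using Suc by simp
  ultimately show ?case by (subst eq) (rule dvd_add)
qed

lemma ind_sum: "(\<Sum>i\<le>p - 1. ind (t - int i) x) = 1"
proof -
  define i0 where "i0 = nat ((t - x) mod int p)"
  have m0: "(t - x) mod int p \<ge> 0" "(t - x) mod int p < int p" using p_gt1 by simp_all
  have i0: "int i0 = (t - x) mod int p" using m0 by (simp add: i0_def)
  have "i0 < p" using m0 i0 by linarith
  have "ind (t - int i) x = (if i = i0 then 1 else 0)" if "i \<le> p - 1" for i
  proof -
    have ilt: "int i < int p" using that p_gt1 by simp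
    have "x - (t - int i) = int i - (t - x)" by simp
    then have "int p dvd (x - (t - int i)) \<longleftrightarrow> (int i) mod int p = (t - x) mod int p"
      by (simp only: mod_eq_dvd_iff)
    also have "(int i) mod int p = int i" using ilt by simp
    also have "int i = (t - x) mod int p \<longleftrightarrow> i = i0" using i0 by linarith
    finally show ?thesis by (simp add: ind_def)
  qed
  then have "(\<Sum>i\<le>p - 1. ind (t - int i) x) = (\<Sum>i\<le>p - 1. (if i = i0 then 1 else 0))"
    by (intro sum.cong) auto
  also have "\<dots> = 1" using \<open>i0 < p\<close> by simp
  finally show ?thesis .
qed

lemma fl_sum_zero: "n \<ge> 1 \<Longrightarrow> (\<Sum>i\<le>p - 1. fl n (t - int i)) = 0"
proof -
  assume n: "n \<ge> 1"
  have "(\<Sum>i\<le>p - 1. fl n (t - int i)) = (\<Sum>k\<le>n. int (n choose k) * (-1) ^ k * (\<Sum>i\<le>p - 1. ind (t - int i) (int k)))"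
    unfolding fl_def by (subst sum.swap) (simp add: sum_distrib_left)
  also have "\<dots> = (\<Sum>k\<le>n. int (n choose k) * (-1) ^ k)" by (simp only: ind_sum mult_1_right)
  also have "\<dots> = (\<Sum>k\<le>n. (-1) ^ k * int (n choose k))" by (simp add: mult.commute)
  also have "\<dots> = 0" using n by (intro choose_alternating_sum) simp
  finally show ?thesis .
qed

lemma fleck: "M \<ge> 1 \<Longrightarrow> int p ^ ((M - 1) div (p - 1)) dvd fl M t"
proof (induction M arbitrary: t rule: less_induct)
  case (less M)
  show ?case
  proof (cases "M - 1 < p - 1")
    case True
    then show ?thesis by simp
  next
    case False
    define n where "n = M - (p - 1)"
    have n1: "n \<ge> 1" "n < M" using False less.prems p_gt1 by (auto simp: n_def)
    have Mn: "M = (p - 1) + n" using False by (simp add: n_def)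
    have ex: "(M - 1) div (p - 1) = Suc ((n - 1) div (p - 1))"
    proof -
      have "M - 1 = (n - 1) + (p - 1)" using Mn n1 by simp
      then have "(M - 1) div (p - 1) = ((n - 1) + (p - 1)) div (p - 1)" by (simp only:)
      also have "\<dots> = (n - 1) div (p - 1) + 1" using p_gt1 by (intro div_add_self2) simp
      finally show ?thesis by simp
    qed
    have "fl M t = act ((1 - monom 1 1) ^ M) (ind t) 0" using fl_act[of M t 0] by simp
    also have "\<dots> = act ((1 - monom 1 1) ^ (p - 1) * (1 - monom 1 1) ^ n) (ind t) 0"
      by (simp only: Mn power_add)
    also have "\<dots> = act ((1 - monom 1 1) ^ (p - 1)) (\<lambda>x. fl n (t - x)) 0"
      by (simp only: act_mult, intro act_cong, rule fl_act)
    also have "\<dots> = (\<Sum>i\<le>p - 1. int ((p - 1) choose i) * (-1) ^ i * fl n (t - int i))"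
      by (simp add: act_one_minus_X_pow)
    also have "\<dots> = (\<Sum>i\<le>p - 1. (int ((p - 1) choose i) * (-1) ^ i - 1) * fl n (t - int i))"
      using fl_sum_zero[OF n1(1), of t] by (simp add: algebra_simps sum.distrib sum_subtractf)
    finally have eq: "fl M t = \<dots>" .
    have "int p * int p ^ ((n - 1) div (p - 1)) dvd \<dots>"
      by (intro dvd_sum mult_dvd_mono choose_pm1 less.IH n1) auto
    then show ?thesis by (simp only: eq ex power_Suc)
  qed
qed

lemma fl_vf: "int p ^ vf M dvd fl M t"
proof (cases "M \<ge> 1")
  case True
  have "vf M * (p - 1) \<le> M - 1" using True by (rule vf_fleck)
  then have "vf M \<le> (M - 1) div (p - 1)" using p_gt1 by (simp add: less_eq_div_iff_mult_less_eq)
  then have "int p ^ vf M dvd int p ^ ((M - 1) div (p - 1))" by (rule le_imp_power_dvd)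
  then show ?thesis using fleck[OF True] by (rule dvd_trans)
next
  case False
  then have "M = 0" by simp
  then show ?thesis by simp
qed

definition ffact :: "int \<Rightarrow> nat \<Rightarrow> int" where
  "ffact y l = (\<Prod>i<l. y - int i)"

definition Fb :: "nat \<Rightarrow> int \<Rightarrow> nat \<Rightarrow> int \<Rightarrow> int" where
  "Fb \<beta> t l x = (if int p ^ \<beta> dvd (x - t) then int p ^ l * ffact ((x - t) div int p ^ \<beta>) l else 0)"

definition B :: "nat \<Rightarrow> nat \<Rightarrow> int \<Rightarrow> nat \<Rightarrow> int" where
  "B \<beta> M t l = act ((1 - monom 1 1) ^ M) (Fb \<beta> t l) 0"

definition Pg :: "int \<Rightarrow> nat \<Rightarrow> int \<Rightarrow> int" where
  "Pg c l x = (\<Prod>i<l. x - c - int p * int i)"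

definition Sg :: "nat \<Rightarrow> int \<Rightarrow> int \<Rightarrow> nat \<Rightarrow> int" where
  "Sg M t c l = (\<Sum>k\<le>M. int (M choose k) * (-1) ^ k * (ind t (int k) * Pg c l (int k)))"

definition U :: "nat \<Rightarrow> int \<Rightarrow> int \<Rightarrow> nat \<Rightarrow> int" where
  "U M t c l = (\<Sum>k\<le>M. int (M choose k) * (-1) ^ k * (ind t (int k) * int k * Pg c l (int k)))"

lemma Pg_Suc: "Pg c (Suc l) x = (x - c) * Pg (c + int p) l x"
  unfolding Pg_def by (subst prod.lessThan_Suc_shift) (simp add: algebra_simps)

lemma Pg_shift: "Pg c l (x + 1) = Pg (c - 1) l x"
  unfolding Pg_def by (simp add: algebra_simps)

lemma ind_shift: "ind t (x + 1) = ind (t - 1) x"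
  unfolding ind_def by (simp add: algebra_simps)

lemma U_0: "U 0 t c l = 0" by (simp add: U_def)

lemma U_Suc: "U (Suc M) t c l = - (int (Suc M) * Sg M (t - 1) (c - 1) l)"
proof -
  have "U (Suc M) t c l = (\<Sum>k\<le>M. int (Suc M choose Suc k) * (-1) ^ Suc k *
            (ind t (int (Suc k)) * int (Suc k) * Pg c l (int (Suc k))))"
    unfolding U_def by (subst sum.atMost_Suc_shift) simp
  also have "\<dots> = (\<Sum>k\<le>M. - (int (Suc M) * (int (M choose k) * (-1) ^ k * (ind (t - 1) (int k) * Pg (c - 1) l (int k)))))"
  proof (intro sum.cong refl)
    fix k
    have e1: "int (Suc M choose Suc k) * int (Suc k) = int (Suc M) * int (M choose k)"
      using Suc_times_binomial[of k M] by (simp only: of_nat_mult[symmetric] mult.commute)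
    have e2: "ind t (int (Suc k)) = ind (t - 1) (int k)" unfolding of_nat_Suc ind_def by (simp add: algebra_simps)
    have e3: "Pg c l (int (Suc k)) = Pg (c - 1) l (int k)" unfolding of_nat_Suc Pg_def by (simp add: algebra_simps)
    show "int (Suc M choose Suc k) * (-1) ^ Suc k * (ind t (int (Suc k)) * int (Suc k) * Pg c l (int (Suc k)))
      = - (int (Suc M) * (int (M choose k) * (-1) ^ k * (ind (t - 1) (int k) * Pg (c - 1) l (int k))))"
      unfolding e2 e3
    proof -
      let ?a = "ind (t - 1) (int k)" and ?b = "Pg (c - 1) l (int k)"
      have "int (Suc M choose Suc k) * (-1) ^ Suc k * (?a * int (Suc k) * ?b)
          = - ((int (Suc M choose Suc k) * int (Suc k)) * ((-1) ^ k * (?a * ?b)))"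
        by (simp add: ac_simps)
      also have "\<dots> = - ((int (Suc M) * int (M choose k)) * ((-1) ^ k * (?a * ?b)))"
        by (simp only: e1)
      also have "\<dots> = - (int (Suc M) * (int (M choose k) * (-1) ^ k * (?a * ?b)))"
        by (simp add: ac_simps)
      finally show "int (Suc M choose Suc k) * (-1) ^ Suc k * (?a * int (Suc k) * ?b)
          = - (int (Suc M) * (int (M choose k) * (-1) ^ k * (?a * ?b)))" .
    qed
  qed
  also have "\<dots> = - (int (Suc M) * Sg M (t - 1) (c - 1) l)"
    unfolding Sg_def by (simp add: sum_distrib_left sum_negf)
  finally show ?thesis .
qed

lemma Sg_Suc: "Sg M t c (Suc l) = U M t (c + int p) l - c * Sg M t (c + int p) l"
  unfolding Sg_def U_def Pg_Suc by (simp add: sum_distrib_left sum_subtractf[symmetric] algebra_simps)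

lemma Sg_vf: "int p ^ vf M dvd Sg M t c l"
proof (induction l arbitrary: M t c)
  case 0
  have "Sg M t c 0 = fl M t" by (simp add: Sg_def fl_def Pg_def)
  then show ?case using fl_vf by simp
next
  case (Suc l)
  have "int p ^ vf M dvd U M t (c + int p) l"
  proof (cases M)
    case 0
    then show ?thesis by (simp add: U_0)
  next
    case (Suc M1)
    have "p ^ multiplicity p (Suc M1) dvd Suc M1" by (rule multiplicity_dvd)
    then have d1: "int p ^ multiplicity p (Suc M1) dvd int (Suc M1)"
      by (metis of_nat_dvd_iff of_nat_power)
    have "int p ^ multiplicity p (Suc M1) * int p ^ vf M1 dvd int (Suc M1) * Sg M1 (t - 1) (c + int p - 1) l"
      using d1 Suc.IH by (rule mult_dvd_mono)
    then show ?thesis using Suc vf_Suc[of M1] by (simp add: U_Suc power_add mult.commute)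
  qed
  then show ?case using Suc.IH by (simp add: Sg_Suc)
qed

lemma Fb1: "Fb 1 t l x = ind t x * Pg t l x"
proof (cases "int p dvd (x - t)")
  case True
  then obtain y where y: "x - t = int p * y" by blast
  have "int p ^ l * ffact y l = (\<Prod>i<l. int p * (y - int i))"
    by (simp add: ffact_def prod.distrib)
  also have "\<dots> = Pg t l x" unfolding Pg_def
    by (intro prod.cong refl) (use y in \<open>simp add: algebra_simps\<close>)
  finally show ?thesis using True y p_gt1 by (simp add: Fb_def ind_def)
next
  case False
  then show ?thesis by (simp add: Fb_def ind_def)
qed

lemma S1: "int p ^ vf M dvd B 1 M t l"
proof -
  have "B 1 M t l = Sg M t t l"
    unfolding B_def Sg_def act_one_minus_X_pow by (intro sum.cong refl) (simp only: Fb1 mult_1 add_0)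
  then show ?thesis using Sg_vf by simp
qed

lemma one_minus_X_pow_expand:
  "(1 - monom (1::int) q) ^ M = (\<Sum>k\<le>M. monom (int (M choose k) * (-1) ^ k) (q * k))"
proof -
  have "(1 - monom (1::int) q) ^ M = (monom (-1) q + 1) ^ M" by (simp add: minus_monom[symmetric])
  also have "\<dots> = (\<Sum>k\<le>M. of_nat (M choose k) * monom (-1) q ^ k * 1 ^ (M - k))"
    by (rule binomial_ring)
  also have "\<dots> = (\<Sum>k\<le>M. monom (int (M choose k) * (-1) ^ k) (q * k))"
    by (intro sum.cong refl) (simp add: monom_power of_nat_poly smult_monom mult.commute)
  finally show ?thesis .
qed

lemma coeff_1mX_p: "coeff ((1 - monom (1::int) 1) ^ p) i = (if i \<le> p then int (p choose i) * (-1) ^ i else 0)"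
proof -
  have "coeff ((1 - monom (1::int) 1) ^ p) i = (\<Sum>k\<le>p. (if k = i then int (p choose k) * (-1) ^ k else 0))"
    by (simp add: one_minus_X_pow_expand coeff_sum coeff_monom)
  also have "\<dots> = (if i \<le> p then int (p choose i) * (-1) ^ i else 0)"
    by (simp add: sum.delta')
  finally show ?thesis .
qed

definition Qp :: "int poly" where "Qp = (1 - monom 1 1) ^ p - (1 - monom 1 p)"

lemma Qp_dvd: "int p dvd coeff Qp i"
proof -
  have c: "coeff Qp i = (if i \<le> p then int (p choose i) * (-1) ^ i else 0)
            - ((if i = 0 then 1 else 0) - (if i = p then 1 else 0))"
    unfolding Qp_def coeff_diff coeff_1mX_p by (simp add: coeff_monom coeff_1)
  consider "i = 0" | "i = p" | "0 < i \<and> i < p" | "i > p" using p_gt1 by linarith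
  then show ?thesis
  proof cases
    case 1
    then show ?thesis unfolding c using p_gt1 by simp
  next
    case 2
    have "int p dvd (-1) ^ p + 1"
    proof (cases "p = 2")
      case True
      then show ?thesis by simp
    next
      case False
      then have "p > 2" using p_gt1 by simp
      then have "odd p" by (rule prime_odd_nat[OF pp])
      then show ?thesis by simp
    qed
    then show ?thesis unfolding c using 2 p_gt1 by simp
  next
    case 3
    then have "p dvd (p choose i)" using pp by (intro dvd_choose_prime) auto
    then have "int p dvd int (p choose i)" by simp
    then show ?thesis unfolding c using 3 by simp
  next
    case 4
    then show ?thesis unfolding c by simp
  qed
qed

lemma Qp_pow_dvd: "int p ^ j dvd coeff (Qp ^ j) i"
proof (induction j arbitrary: i)
  case 0
  then show ?case by simp
next
  case (Suc j)
  show ?case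
    unfolding power_Suc coeff_mult
    by (intro dvd_sum mult_dvd_mono Qp_dvd Suc.IH)
qed

lemma expand2: "(1 - monom (1::int) 1) ^ (p * M) = (\<Sum>j\<le>M. of_nat (M choose j) * Qp ^ j * (1 - monom 1 p) ^ (M - j))"
proof -
  have "(1 - monom (1::int) 1) ^ (p * M) = (Qp + (1 - monom 1 p)) ^ M"
    by (simp add: Qp_def power_mult)
  also have "\<dots> = (\<Sum>j\<le>M. of_nat (M choose j) * Qp ^ j * (1 - monom 1 p) ^ (M - j))"
    by (rule binomial_ring)
  finally show ?thesis .
qed

lemma act_of_nat_mult: "act (of_nat c * P) f x = int c * act P f x"
  by (simp add: of_nat_poly act_smult)

lemma Fb_add: "Fb \<beta> t l (z + y) = Fb \<beta> (t - y) l z"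
proof -
  have "z + y - t = z - (t - y)" by simp
  then show ?thesis unfolding Fb_def by (simp only:)
qed

lemma Fb_shift: "act P (Fb \<beta> t l) y = act P (Fb \<beta> (t - y) l) 0"
proof -
  have "act P (Fb \<beta> t l) y = act P (Fb \<beta> t l) (0 + y)" by simp
  also have "\<dots> = act P (\<lambda>z. Fb \<beta> t l (z + y)) 0" by (rule act_shift)
  also have "\<dots> = act P (Fb \<beta> (t - y) l) 0" by (intro act_cong) (rule Fb_add)
  finally show ?thesis .
qed

lemma B_shift: "act ((1 - monom 1 1) ^ M) (Fb \<beta> t l) y = B \<beta> M (t - y) l"
  unfolding B_def by (rule Fb_shift)

lemma Fb_lift: "Fb (Suc \<beta>) s l (x + int (p * k)) = (if int p dvd (s - x) then Fb \<beta> ((s - x) div int p) l (int k) else 0)"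
proof (cases "int p dvd (s - x)")
  case True
  then obtain u where u: "s - x = int p * u" by blast
  have e: "x + int (p * k) - s = int p * (int k - u)" using u by (simp add: algebra_simps)
  have pz: "int p \<noteq> 0" using p_gt1 by simp
  have d: "int p ^ Suc \<beta> dvd int p * (int k - u) \<longleftrightarrow> int p ^ \<beta> dvd (int k - u)"
    using pz by (simp add: power_Suc)
  have q: "int p * (int k - u) div int p ^ Suc \<beta> = (int k - u) div int p ^ \<beta>"
    using pz by (simp add: power_Suc div_mult_mult1)
  have "(s - x) div int p = u" using u pz by simp
  then show ?thesis using True e d q by (simp add: Fb_def)
next
  case False
  have "\<not> int p ^ Suc \<beta> dvd (x + int (p * k) - s)"
  proof
    assume "int p ^ Suc \<beta> dvd (x + int (p * k) - s)"
    then have "int p dvd (x + int (p * k) - s)" by (rule dvd_trans[rotated]) (simp add: power_Suc)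
    then have "int p dvd (x + int (p * k) - s) - int p * int k" by (rule dvd_diff) simp_all
    moreover have "(x + int (p * k) - s) - int p * int k = - (s - x)" by simp
    ultimately have "int p dvd - (s - x)" by simp
    then show False using False by (simp add: dvd_diff_commute)
  qed
  then show ?thesis using False by (simp add: Fb_def)
qed

lemma G_lemma: "act ((1 - monom 1 p) ^ N) (Fb (Suc \<beta>) s l) x
   = (if int p dvd (s - x) then B \<beta> N ((s - x) div int p) l else 0)"
  unfolding act_one_minus_X_pow B_def Fb_lift
  by (auto simp: act_one_minus_X_pow)


definition Gf :: "nat \<Rightarrow> int \<Rightarrow> nat \<Rightarrow> nat \<Rightarrow> int \<Rightarrow> int" where
  "Gf \<beta> s l N x = (if int p dvd (s - x) then B \<beta> N ((s - x) div int p) l else 0)"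

definition SH :: "nat \<Rightarrow> bool" where
  "SH \<beta> \<longleftrightarrow> (\<forall>M t l. int p ^ vf (M div p ^ (\<beta> - 1)) dvd B \<beta> M t l)"

lemma B_pM: "B (Suc \<beta>) (p * M) s l
   = (\<Sum>j\<le>M. int (M choose j) * act (Qp ^ j) (Gf \<beta> s l (M - j)) 0)"
proof -
  have "B (Suc \<beta>) (p * M) s l = (\<Sum>j\<le>M. act (of_nat (M choose j) * (Qp ^ j * (1 - monom 1 p) ^ (M - j))) (Fb (Suc \<beta>) s l) 0)"
    unfolding B_def expand2 act_sum by (simp add: mult.assoc)
  also have "\<dots> = (\<Sum>j\<le>M. int (M choose j) * act (Qp ^ j) (Gf \<beta> s l (M - j)) 0)"
  proof (intro sum.cong refl)
    fix j
    show "act (of_nat (M choose j) * (Qp ^ j * (1 - monom 1 p) ^ (M - j))) (Fb (Suc \<beta>) s l) 0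
        = int (M choose j) * act (Qp ^ j) (Gf \<beta> s l (M - j)) 0" (is "?L = ?R")
    proof -
      have h: "act ((1 - monom 1 p) ^ (M - j)) (Fb (Suc \<beta>) s l) y = Gf \<beta> s l (M - j) y" for y
        unfolding Gf_def by (rule G_lemma)
      show "?L = ?R" unfolding act_of_nat_mult unfolding act_mult by (simp only: act_cong[OF h])
    qed
  qed
  finally show ?thesis .
qed

lemma K_lemma:
  assumes b1: "\<beta> \<ge> 1" and sh: "SH \<beta>"
  shows "int p ^ (vf (M div p ^ (\<beta> - 1)) + 1) dvd
           B (Suc \<beta>) (p * M) s l - (if int p dvd s then B \<beta> M (s div int p) l else 0)"
proof -
  define tm where "tm j = int (M choose j) * act (Qp ^ j) (Gf \<beta> s l (M - j)) 0" for j
  have t0: "tm 0 = (if int p dvd s then B \<beta> M (s div int p) l else 0)"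
    by (simp add: tm_def Gf_def)
  have "B (Suc \<beta>) (p * M) s l = (\<Sum>j\<le>M. tm j)" unfolding B_pM tm_def ..
  also have "\<dots> = tm 0 + (\<Sum>j\<in>{..M} - {0}. tm j)"
    by (rule sum.remove) auto
  finally have eq: "B (Suc \<beta>) (p * M) s l - (if int p dvd s then B \<beta> M (s div int p) l else 0)
                 = (\<Sum>j\<in>{..M} - {0}. tm j)" using t0 by simp
  have "int p ^ (vf (M div p ^ (\<beta> - 1)) + 1) dvd tm j" if j: "j \<in> {..M} - {0}" for j
  proof -
    have j1: "1 \<le> j" "j \<le> M" using j by auto
    define e' where "e' = vf ((M - j) div p ^ (\<beta> - 1))"
    define mC where "mC = multiplicity p (M choose j)"
    have g: "int p ^ e' dvd Gf \<beta> s l (M - j) y" for y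
      using sh unfolding SH_def Gf_def e'_def by auto
    have a: "int p ^ j * int p ^ e' dvd act (Qp ^ j) (Gf \<beta> s l (M - j)) 0"
      by (rule act_dvd) (rule Qp_pow_dvd, rule g)
    have "p ^ mC dvd (M choose j)" unfolding mC_def by (rule multiplicity_dvd)
    then have c: "int p ^ mC dvd int (M choose j)" by (metis of_nat_dvd_iff of_nat_power)
    have "int p ^ mC * (int p ^ j * int p ^ e') dvd tm j"
      unfolding tm_def using c a by (rule mult_dvd_mono)
    then have d: "int p ^ (mC + j + e') dvd tm j" by (simp add: power_add mult.assoc)
    have "vf (M div p ^ (\<beta> - 1)) + 1 \<le> mC + j + e'"
      using vf_key[OF j1, of "\<beta> - 1"] unfolding mC_def e'_def by linarith
    then have "int p ^ (vf (M div p ^ (\<beta> - 1)) + 1) dvd int p ^ (mC + j + e')"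
      by (rule le_imp_power_dvd)
    then show ?thesis using d by (rule dvd_trans)
  qed
  then have "int p ^ (vf (M div p ^ (\<beta> - 1)) + 1) dvd (\<Sum>j\<in>{..M} - {0}. tm j)"
    by (rule dvd_sum)
  then show ?thesis using eq by simp
qed

lemma B_decomp: "B (Suc \<beta>) M t l = (\<Sum>i\<le>M mod p. int (M mod p choose i) * (-1) ^ i * B (Suc \<beta>) (p * (M div p)) (t - int i) l)"
proof -
  have M: "M = M mod p + p * (M div p)" by simp
  have "B (Suc \<beta>) M t l = act ((1 - monom 1 1) ^ (M mod p) * (1 - monom 1 1) ^ (p * (M div p))) (Fb (Suc \<beta>) t l) 0"
    unfolding B_def by (subst M) (simp only: power_add)
  also have "\<dots> = act ((1 - monom 1 1) ^ (M mod p)) (act ((1 - monom 1 1) ^ (p * (M div p))) (Fb (Suc \<beta>) t l)) 0"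
    by (rule act_mult)
  also have "\<dots> = (\<Sum>i\<le>M mod p. int (M mod p choose i) * (-1) ^ i * act ((1 - monom 1 1) ^ (p * (M div p))) (Fb (Suc \<beta>) t l) (int i))"
    unfolding act_one_minus_X_pow[of 1 "M mod p"] by simp
  also have "\<dots> = (\<Sum>i\<le>M mod p. int (M mod p choose i) * (-1) ^ i * B (Suc \<beta>) (p * (M div p)) (t - int i) l)"
    by (simp only: B_shift)
  finally show ?thesis .
qed

lemma div_pow_Suc: "\<beta> \<ge> 1 \<Longrightarrow> M div p ^ \<beta> = (M div p) div p ^ (\<beta> - 1)"
  by (cases \<beta>) (simp_all add: div_mult2_eq)

lemma SH_step:
  assumes b1: "\<beta> \<ge> 1" and sh: "SH \<beta>"
  shows "SH (Suc \<beta>)"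
  unfolding SH_def
proof (intro allI)
  fix M t l
  define e where "e = vf ((M div p) div p ^ (\<beta> - 1))"
  have hs: "int p ^ e dvd B (Suc \<beta>) (p * (M div p)) s l" for s
  proof -
    have "int p ^ e dvd int p ^ (e + 1)" by (rule le_imp_power_dvd) simp
    then have k: "int p ^ e dvd B (Suc \<beta>) (p * (M div p)) s l - (if int p dvd s then B \<beta> (M div p) (s div int p) l else 0)"
      using K_lemma[OF b1 sh, of "M div p" s l] unfolding e_def by (rule dvd_trans)
    have "int p ^ e dvd B \<beta> (M div p) (s div int p) l"
      using sh unfolding SH_def e_def by blast
    then have "int p ^ e dvd (if int p dvd s then B \<beta> (M div p) (s div int p) l else 0)"
      by simp
    from dvd_add[OF k this] show ?thesis by simp
  qed
  have "int p ^ e dvd B (Suc \<beta>) M t l"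
    by (subst B_decomp) (intro dvd_sum dvd_mult hs)
  moreover have "M div p ^ (Suc \<beta> - 1) = (M div p) div p ^ (\<beta> - 1)"
    using b1 div_pow_Suc[of \<beta> M] by simp
  ultimately show "int p ^ vf (M div p ^ (Suc \<beta> - 1)) dvd B (Suc \<beta>) M t l"
    unfolding e_def by simp
qed

lemma SH_all: "\<beta> \<ge> 1 \<Longrightarrow> SH \<beta>"
proof (induction \<beta>)
  case 0
  then show ?case by simp
next
  case (Suc \<beta>)
  show ?case
  proof (cases "\<beta> = 0")
    case True
    then show ?thesis using S1 by (simp add: SH_def)
  next
    case False
    then have "\<beta> \<ge> 1" by simp
    then show ?thesis using Suc.IH SH_step by blast
  qed
qed


lemma H_term:
  assumes i: "i \<le> M0" and M0: "M0 < p"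
  shows "int (M0 choose i) * (-1) ^ i * (if int p dvd (r - int i) then B \<alpha> M' ((r - int i) div int p) l else 0)
       = (if i = nat (r mod int p) then int (M0 choose i) * (-1) ^ i * B \<alpha> M' (r div int p) l else 0)"
proof -
  have pz: "int p > 0" using p_gt1 by simp
  have ip: "int i < int p" using i M0 by simp
  have t0: "int (nat (r mod int p)) = r mod int p" using pz by simp
  have "int p dvd (r - int i) \<longleftrightarrow> r mod int p = int i mod int p"
    by (simp add: mod_eq_dvd_iff)
  also have "int i mod int p = int i" using ip by simp
  also have "r mod int p = int i \<longleftrightarrow> i = nat (r mod int p)" using t0 by linarith
  finally have iff: "int p dvd (r - int i) \<longleftrightarrow> i = nat (r mod int p)" .
  have "(r - r mod int p) div int p = r div int p"
    using pz by (simp add: minus_mod_eq_mult_div)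
  then have dv: "i = nat (r mod int p) \<Longrightarrow> (r - int i) div int p = r div int p" using t0 by simp
  show ?thesis using iff dv by auto
qed

lemma H_sum:
  assumes M0: "M0 < p"
  shows "(\<Sum>i\<le>M0. int (M0 choose i) * (-1) ^ i * (if int p dvd (r - int i) then B \<alpha> M' ((r - int i) div int p) l else 0))
       = (-1) ^ nat (r mod int p) * int (M0 choose nat (r mod int p)) * B \<alpha> M' (r div int p) l"
proof -
  have "(\<Sum>i\<le>M0. int (M0 choose i) * (-1) ^ i * (if int p dvd (r - int i) then B \<alpha> M' ((r - int i) div int p) l else 0))
      = (\<Sum>i\<le>M0. (if i = nat (r mod int p) then int (M0 choose i) * (-1) ^ i * B \<alpha> M' (r div int p) l else 0))"
    by (intro sum.cong refl H_term M0) simp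
  also have "\<dots> = (if nat (r mod int p) \<le> M0 then int (M0 choose nat (r mod int p)) * (-1) ^ nat (r mod int p) * B \<alpha> M' (r div int p) l else 0)"
    by (simp add: sum.delta')
  also have "\<dots> = (-1) ^ nat (r mod int p) * int (M0 choose nat (r mod int p)) * B \<alpha> M' (r div int p) l"
    by (auto simp: binomial_eq_0)
  finally show ?thesis .
qed

lemma final_comb:
  assumes a1: "\<alpha> \<ge> 1"
  shows "int p ^ (vf (n div p ^ \<alpha>) + 1) dvd
     B (Suc \<alpha>) n r l - (-1) ^ nat (r mod int p) * int ((n mod p) choose nat (r mod int p)) * B \<alpha> (n div p) (r div int p) l"
proof -
  define H where "H i = (if int p dvd (r - int i) then B \<alpha> (n div p) ((r - int i) div int p) l else 0)" for i
  define c where "c i = int (n mod p choose i) * (-1) ^ i" for i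
  have M0: "n mod p < p" using p_gt1 by simp
  have "B (Suc \<alpha>) n r l - (-1) ^ nat (r mod int p) * int ((n mod p) choose nat (r mod int p)) * B \<alpha> (n div p) (r div int p) l
      = (\<Sum>i\<le>n mod p. c i * B (Suc \<alpha>) (p * (n div p)) (r - int i) l) - (\<Sum>i\<le>n mod p. c i * H i)"
    unfolding c_def H_def H_sum[OF M0] by (subst B_decomp) (rule refl)
  also have "\<dots> = (\<Sum>i\<le>n mod p. c i * (B (Suc \<alpha>) (p * (n div p)) (r - int i) l - H i))"
    by (simp add: sum_subtractf algebra_simps)
  finally have eq: "B (Suc \<alpha>) n r l - (-1) ^ nat (r mod int p) * int ((n mod p) choose nat (r mod int p)) * B \<alpha> (n div p) (r div int p) l
      = (\<Sum>i\<le>n mod p. c i * (B (Suc \<alpha>) (p * (n div p)) (r - int i) l - H i))" .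
  have e: "n div p ^ \<alpha> = (n div p) div p ^ (\<alpha> - 1)" using a1 by (rule div_pow_Suc)
  have "int p ^ (vf (n div p ^ \<alpha>) + 1) dvd B (Suc \<alpha>) (p * (n div p)) (r - int i) l - H i" for i
    unfolding e H_def by (rule K_lemma[OF a1 SH_all[OF a1]])
  then have "int p ^ (vf (n div p ^ \<alpha>) + 1) dvd (\<Sum>i\<le>n mod p. c i * (B (Suc \<alpha>) (p * (n div p)) (r - int i) l - H i))"
    by (intro dvd_sum dvd_mult)
  then show ?thesis by (simp only: eq)
qed

lemma B_sum: "B \<beta> n r l = (\<Sum>k\<le>n. int (n choose k) * (-1) ^ k * Fb \<beta> r l (int k))"
  unfolding B_def act_one_minus_X_pow by simp

lemma fact_gchoose: "of_nat (fact l) * ((of_int y :: rat) gchoose l) = of_int (ffact y l)"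
proof -
  have "((of_int y :: rat) gchoose l) = (\<Prod>i=0..<l. of_int y - of_nat i) / fact l"
    by (simp add: gbinomial_prod_rev)
  moreover have "(\<Prod>i=0..<l. (of_int y :: rat) - of_nat i) = of_int (ffact y l)"
    by (simp add: ffact_def atLeast0LessThan)
  ultimately show ?thesis by simp
qed

lemma T_eq: "T p l \<beta> n r = of_int (B \<beta> n r l) / of_nat (fact (n div p ^ (\<beta> - 1)))"
proof -
  define N where "N = n div p ^ (\<beta> - 1)"
  define f where "f k = (of_nat (n choose k) * (-1) ^ k * ((of_int ((int k - r) div int p ^ \<beta>) :: rat) gchoose l))" for k
  have S: "{k. k \<le> n \<and> int k mod int p ^ \<beta> = r mod int p ^ \<beta>} = {k \<in> {..n}. int p ^ \<beta> dvd (int k - r)}"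
    by (auto simp: mod_eq_dvd_iff)
  have "(\<Sum>k\<in>{k. k \<le> n \<and> int k mod int p ^ \<beta> = r mod int p ^ \<beta>}. f k)
      = (\<Sum>k\<le>n. if int p ^ \<beta> dvd (int k - r) then f k else 0)"
    unfolding S by (rule sum.inter_filter) simp
  then have "of_nat (fact l) * of_nat p ^ l * (\<Sum>k\<in>{k. k \<le> n \<and> int k mod int p ^ \<beta> = r mod int p ^ \<beta>}. f k)
      = (\<Sum>k\<le>n. of_nat (fact l) * of_nat p ^ l * (if int p ^ \<beta> dvd (int k - r) then f k else 0))"
    by (simp add: sum_distrib_left)
  also have "\<dots> = (\<Sum>k\<le>n. of_int (int (n choose k) * (-1) ^ k * Fb \<beta> r l (int k)))"
  proof (intro sum.cong refl)
    fix k
    show "of_nat (fact l) * of_nat p ^ l * (if int p ^ \<beta> dvd (int k - r) then f k else 0)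
        = (of_int (int (n choose k) * (-1) ^ k * Fb \<beta> r l (int k)) :: rat)"
    proof (cases "int p ^ \<beta> dvd (int k - r)")
      case True
      have "of_nat (fact l) * of_nat p ^ l * f k
          = of_nat (n choose k) * (-1) ^ k * of_nat p ^ l * (of_nat (fact l) * ((of_int ((int k - r) div int p ^ \<beta>) :: rat) gchoose l))"
        by (simp add: f_def algebra_simps)
      also have "\<dots> = of_int (int (n choose k) * (-1) ^ k * Fb \<beta> r l (int k))"
        using True by (simp only: fact_gchoose) (simp add: Fb_def)
      finally show ?thesis using True by simp
    next
      case False
      then show ?thesis by (simp add: Fb_def)
    qed
  qed
  also have "\<dots> = of_int (B \<beta> n r l)" by (simp add: B_sum)
  finally have h: "of_nat (fact l) * of_nat p ^ l * (\<Sum>k\<in>{k. k \<le> n \<and> int k mod int p ^ \<beta> = r mod int p ^ \<beta>}. f k) = (of_int (B \<beta> n r l) :: rat)" .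
  show ?thesis unfolding T_def f_def[symmetric] using h by (simp add: field_simps)
qed


end

theorem theorem1p5:
  fixes p \<alpha> l n :: nat and r :: int
  assumes "prime p" and "\<alpha> \<ge> 2"
  shows "qcong (T p l (\<alpha> + 1) n r)
                ((-1) ^ nat (r mod int p) * of_nat ((n mod p) choose nat (r mod int p))
                   * T p l \<alpha> (n div p) (r div int p)) p 1"
proof -
  interpret pr p using assms(1) by unfold_locales
  have a1: "\<alpha> \<ge> 1" using assms(2) by simp
  define N where "N = n div p ^ \<alpha>"
  define t0 where "t0 = nat (r mod int p)"
  define c where "c = (-1) ^ t0 * int ((n mod p) choose t0)"
  define D where "D = B (Suc \<alpha>) n r l - c * B \<alpha> (n div p) (r div int p) l"
  have dD: "int p ^ (vf N + 1) dvd D"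
    using final_comb[OF a1, of n r l] unfolding D_def N_def t0_def c_def by (simp add: mult.assoc)
  have T1: "T p l (\<alpha> + 1) n r = of_int (B (Suc \<alpha>) n r l) / of_nat (fact N)"
    using T_eq[of l "\<alpha> + 1" n r] by (simp add: N_def)
  have T2: "T p l \<alpha> (n div p) (r div int p) = of_int (B \<alpha> (n div p) (r div int p) l) / of_nat (fact N)"
    using T_eq[of l \<alpha> "n div p" "r div int p"] div_pow_Suc[OF a1, of n] by (simp add: N_def)
  have nu: "\<not> is_unit p" using p_gt1 by simp
  have fN: "(fact N :: nat) \<noteq> 0" by simp
  obtain w where w: "fact N = p ^ vf N * w" "\<not> p dvd w"
    using multiplicity_decompose'[OF fN nu] unfolding vf_def by blast
  have w0: "w \<noteq> 0" using w(1) by (metis fact_nonzero mult_0_right)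
  from dD obtain x0 where x0: "D = int p ^ (vf N + 1) * x0" by (auto elim: dvdE)
  define x where "x = int p * x0"
  have Dx: "D = int p ^ vf N * x" by (simp add: x0 x_def power_add mult_ac)
  have pz: "(of_nat p :: rat) \<noteq> 0" using p_gt1 by simp
  have "T p l (\<alpha> + 1) n r - (-1) ^ nat (r mod int p) * of_nat ((n mod p) choose nat (r mod int p))
                   * T p l \<alpha> (n div p) (r div int p) = of_int D / of_nat (fact N)"
    unfolding T1 T2 D_def c_def t0_def by (simp add: field_simps)
  also have "\<dots> = of_int x / of_int (int w)"
    unfolding Dx w(1) using pz w0 by (simp add: field_simps)
  finally have eq: "T p l (\<alpha> + 1) n r - (-1) ^ nat (r mod int p) * of_nat ((n mod p) choose nat (r mod int p))
                   * T p l \<alpha> (n div p) (r div int p) = of_int x / of_int (int w)" .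
  show ?thesis unfolding qcong_def
  proof (intro exI conjI)
    show "int w \<noteq> 0" using w0 by simp
    show "\<not> int p dvd int w" using w(2) by simp
    show "int p ^ 1 dvd x" by (simp add: x_def)
  qed (rule eq)
qed

end
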